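(* Let $\mathcal{X},\mathcal{Y}$ be finite, $p(X,Y)\in\Delta_{\mathcal{X}\times\mathcal{Y}}$ of full support, $\mathcal{T}=\mathbb{N}$, $\mathcal{E}_{\mathrm{ce}}:=\{r(X)\,\mathcal{U}(\mathcal{Y}) : r\in\Delta_{\mathcal{X}}\}$, and let $\mathrm{DIB}_{\mathrm{ce}}(\lambda)$ denote the DIB problem on $\mathcal{A}=\mathcal{X}\times\mathcal{Y}$ with exponential family $\mathcal{E}_{\mathrm{ce}}$ and unconstrained encoders $C=C(\mathcal{X}\times\mathcal{Y},\mathcal{T})$. Let $\Lambda:=D(p\|\mathcal{E}_{\mathrm{ce}})$. Then for all $(\sigma,\tau)\in\mathrm{Bij}(\mathcal{X})\times\mathrm{Bij}(\mathcal{Y})$: (i) if $\kappa\in\mathrm{DIB}_{\mathrm{ce}}(\Lambda)$, then $(\sigma,\tau)\in G_{\mathrm{ce}}$ if and only if $\kappa\circ(\sigma\otimes\tau)=\kappa$; (ii) if $(\sigma,\tau)\in G_{\mathrm{ce}}$, then $\kappa\circ(\sigma\otimes\tau)=\kappa$ for every $0\le\lambda\le\Lambda$ and every $\kappa\in\mathrm{DIB}_{\mathrm{ce}}(\lambda)$; (iii) the projection $\pi$ associated with the equivalence relation $(x,y)\sim(x',y')\iff p(y|x)=p(y'|x')$ does not coincide with the projection on $G_{\mathrm{ce}}$-orbits in general: there exist finite $\mathcal{X},\mathcal{Y}$ and a full-support $p(X,Y)$ for which $\pi\neq\pi_{\mathrm{ce}}$ (e.g. $|\mathcal{X}|=3$,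 $|\mathcal{Y}|=2$).
   Context: $\mathcal{U}(\mathcal{Y})$ is the uniform distribution; $(\sigma\otimes\tau)(x,y)=(\sigma(x),\tau(y))$. The channel equivariance group $G_{\mathrm{ce}}$ is the group of pairs $(\sigma,\tau)\in\mathrm{Bij}(\mathcal{X})\times\mathrm{Bij}(\mathcal{Y})$ with $p(Y|X)\circ\sigma=\tau\circ p(Y|X)$, equivalently $p(\tau(y)|\sigma(x))=p(y|x)$ for all $x,y$; $\pi_{\mathrm{ce}}$ is the projection onto $G_{\mathrm{ce}}$-orbits of $\mathcal{X}\times\mathcal{Y}$. DIB problem: for finite $\mathcal{A}$, $p\in\Delta_{\mathcal{A}}$, exponential family $\mathcal{E}\subseteq\Delta_{\mathcal{A}}$ with closure $\mathrm{cl}\,\mathcal{E}$, encoder set $C\subseteq C(\mathcal{A},\mathcal{T})$, $D(p\|\mathcal{E}):=\inf_{r\in\mathrm{cl}\mathcal{E}}D(p\|r)$, $D(\kappa\cdot p\|\kappa\cdot\mathcal{E}):=\inf_{r\in\mathrm{cl}\mathcal{E}}D(\kappa\cdot p\|\kappa\cdot r)$ where $(\kappa\cdot r)(t)=\sum_a\kappa(t|a)r(a)$, and $\mathrm{DIB}(\lambda):=\operatorname{argmin}\{I_\kappa(A;T):\kappa\in C,\ D(\kappa\cdot p\|\kappa\cdot\mathcal{E})\ge\lambda\}$ for $0\le\lambda\le D(p\|\mathcal{E})$, with $I_\kappa$ computed from $p(a)\kappa(t|a)$. Channels compose by $(\mu\circ\kappa)(c|a)=\sum_b\mu(c|b)\kappa(b|a)$;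 bijections are deterministic channels. *)

theory Defs
  imports "HOL-Analysis.Analysis" "HOL-Library.Numeral_Type"
begin

definition prob_simplex :: "('a::finite \<Rightarrow> real) set" where
  "prob_simplex = {r. (\<forall>a. 0 \<le> r a) \<and> sum r UNIV = 1}"

definition full_support :: "('a::finite \<Rightarrow> real) \<Rightarrow> bool" where
  "full_support p \<longleftrightarrow> p \<in> prob_simplex \<and> (\<forall>a. 0 < p a)"

text \<open>Channels (Markov kernels) from a finite type 'a to T = nat:
  kappa a t is kappa(t|a).\<close>
definition is_channel :: "('a \<Rightarrow> nat \<Rightarrow> real) \<Rightarrow> bool" where
  "is_channel \<kappa> \<longleftrightarrow> (\<forall>a t. 0 \<le> \<kappa> a t) \<and> (\<forall>a. ((\<kappa> a) has_sum 1) UNIV)"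

definition push :: "('a::finite \<Rightarrow> 'b \<Rightarrow> real) \<Rightarrow> ('a \<Rightarrow> real) \<Rightarrow> 'b \<Rightarrow> real" where
  "push \<kappa> r t = (\<Sum>a\<in>UNIV. \<kappa> a t * r a)"

definition chan_comp :: "('b::finite \<Rightarrow> 'c \<Rightarrow> real) \<Rightarrow> ('a \<Rightarrow> 'b \<Rightarrow> real) \<Rightarrow> 'a \<Rightarrow> 'c \<Rightarrow> real" where
  "chan_comp \<mu> \<kappa> a c = (\<Sum>b\<in>UNIV. \<mu> b c * \<kappa> a b)"

definition det_chan :: "('a \<Rightarrow> 'b) \<Rightarrow> 'a \<Rightarrow> 'b \<Rightarrow> real" where
  "det_chan f a b = (if b = f a then 1 else 0)"

definition kl_term :: "real \<Rightarrow> real \<Rightarrow> ereal" where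
  "kl_term q r = (if q = 0 then 0 else if r = 0 then \<infinity> else ereal (q * ln (q / r)))"

definition KL :: "('b \<Rightarrow> real) \<Rightarrow> ('b \<Rightarrow> real) \<Rightarrow> ereal" where
  "KL q r = (\<Sum>\<^sub>\<infinity>t\<in>UNIV. kl_term (q t) (r t))"

definition mutual_info :: "('a::finite \<Rightarrow> real) \<Rightarrow> ('a \<Rightarrow> nat \<Rightarrow> real) \<Rightarrow> ereal" where
  "mutual_info p \<kappa> = (\<Sum>a\<in>UNIV. ereal (p a) * KL (\<kappa> a) (push \<kappa> p))"

definition E_ce :: "('x::finite \<times> 'y::finite \<Rightarrow> real) set" where
  "E_ce = {(\<lambda>(x, y). r x / real CARD('y)) | r. r \<in> prob_simplex}"

definition D_fam :: "('a \<Rightarrow> real) \<Rightarrow> ('a \<Rightarrow> real) set \<Rightarrow> ereal" where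
  "D_fam p E = (INF r\<in>closure E. KL p r)"

definition D_push_fam :: "('a::finite \<Rightarrow> nat \<Rightarrow> real) \<Rightarrow> ('a \<Rightarrow> real) \<Rightarrow> ('a \<Rightarrow> real) set \<Rightarrow> ereal" where
  "D_push_fam \<kappa> p E = (INF r\<in>closure E. KL (push \<kappa> p) (push \<kappa> r))"

definition DIB_ce :: "('x::finite \<times> 'y::finite \<Rightarrow> real) \<Rightarrow> ereal \<Rightarrow> ('x \<times> 'y \<Rightarrow> nat \<Rightarrow> real) set" where
  "DIB_ce p lam =
     {\<kappa>. is_channel \<kappa> \<and> lam \<le> D_push_fam \<kappa> p E_ce \<and>
          (\<forall>\<kappa>'. is_channel \<kappa>' \<and> lam \<le> D_push_fam \<kappa>' p E_ce \<longrightarrow> mutual_info p \<kappa> \<le> mutual_info p \<kappa>')}"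

definition cond_prob :: "('x \<times> 'y::finite \<Rightarrow> real) \<Rightarrow> 'x \<Rightarrow> 'y \<Rightarrow> real" where
  "cond_prob p x y = p (x, y) / (\<Sum>y'\<in>UNIV. p (x, y'))"

definition G_ce :: "('x \<times> 'y::finite \<Rightarrow> real) \<Rightarrow> (('x \<Rightarrow> 'x) \<times> ('y \<Rightarrow> 'y)) set" where
  "G_ce p = {(\<sigma>, \<tau>). bij \<sigma> \<and> bij \<tau> \<and> (\<forall>x y. cond_prob p (\<sigma> x) (\<tau> y) = cond_prob p x y)}"

definition proj_ce :: "('x \<times> 'y::finite \<Rightarrow> real) \<Rightarrow> 'x \<times> 'y \<Rightarrow> ('x \<times> 'y) set" where
  "proj_ce p a = {(\<sigma> (fst a), \<tau> (snd a)) | \<sigma> \<tau>. (\<sigma>, \<tau>) \<in> G_ce p}"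

definition proj_cond :: "('x \<times> 'y::finite \<Rightarrow> real) \<Rightarrow> 'x \<times> 'y \<Rightarrow> ('x \<times> 'y) set" where
  "proj_cond p a = {b. cond_prob p (fst b) (snd b) = cond_prob p (fst a) (snd a)}"

end

theory Submission
  imports Defs "HOL-Analysis.Cartesian_Space"
begin


lemma infsum_ereal:
  fixes f :: "'a \<Rightarrow> real"
  assumes "f summable_on A"
  shows "(\<Sum>\<^sub>\<infinity>x\<in>A. ereal (f x)) = ereal (\<Sum>\<^sub>\<infinity>x\<in>A. f x)"
proof -
  have "infsum (ereal \<circ> f) A = ereal (infsum f A)"
  proof (rule infsum_comm_additive_general)
    show "isCont ereal (infsum f A)"
      using continuous_on_ereal[OF continuous_on_id, of UNIV]
      by (simp add: continuous_on_eq_continuous_at)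
  qed (auto simp: assms)
  then show ?thesis by (simp add: o_def)
qed

lemma KL_eq_real:
  assumes "\<And>t. P t \<noteq> 0 \<Longrightarrow> Q t \<noteq> 0"
    and "(\<lambda>t. P t * ln (P t / Q t)) summable_on UNIV"
  shows "KL P Q = ereal (\<Sum>\<^sub>\<infinity>t. P t * ln (P t / Q t))"
proof -
  have "\<And>t. kl_term (P t) (Q t) = ereal (P t * ln (P t / Q t))"
    using assms(1) by (auto simp: kl_term_def)
  then show ?thesis unfolding KL_def by (simp add: infsum_ereal[OF assms(2)])
qed

lemma ln_ge_1_minus_inv: "0 < u \<Longrightarrow> 1 - 1/u \<le> ln (u::real)"
  using ln_le_minus_one[of "1/u"] by (simp add: ln_div)

lemma ln_eq_1_minus_inv: "0 < u \<Longrightarrow> ln (u::real) = 1 - 1/u \<Longrightarrow> u = 1"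
  using ln_eq_minus_one[of "1/u"] by (simp add: ln_div)

lemma xlnx_lower: "0 < u \<Longrightarrow> 0 < v \<Longrightarrow> u - v \<le> u * ln (u / (v::real))"
proof -
  assume u: "0 < u" and v: "0 < v"
  have "1 - 1/(u/v) \<le> ln (u/v)" using u v by (intro ln_ge_1_minus_inv) auto
  then have "u * (1 - 1/(u/v)) \<le> u * ln (u/v)" using u by (intro mult_left_mono) auto
  moreover have "u * (1 - 1/(u/v)) = u - v" using u v by (simp add: field_simps)
  ultimately show ?thesis by simp
qed

lemma xlnx_eq: "0 < u \<Longrightarrow> 0 < v \<Longrightarrow> u * ln (u / (v::real)) = u - v \<Longrightarrow> u = v"
proof -
  assume u: "0 < u" and v: "0 < v" and e: "u * ln (u / v) = u - v"
  have "ln (u/v) = 1 - 1/(u/v)" using e u v by (simp add: field_simps)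
  then have "u/v = 1" using u v by (intro ln_eq_1_minus_inv) auto
  then show ?thesis using v by simp
qed

lemma has_sum_sum_fin:
  fixes f :: "'i \<Rightarrow> 'a \<Rightarrow> real"
  assumes "finite I" "\<And>i. i \<in> I \<Longrightarrow> (f i has_sum s i) A"
  shows "((\<lambda>x. \<Sum>i\<in>I. f i x) has_sum (\<Sum>i\<in>I. s i)) A"
  using assms
proof (induction I rule: finite_induct)
  case empty then show ?case by simp
next
  case (insert j I)
  then show ?case by (simp add: has_sum_add)
qed

lemma summable_sum_fin:
  fixes f :: "'i \<Rightarrow> 'a \<Rightarrow> real"
  assumes "finite I" "\<And>i. i \<in> I \<Longrightarrow> f i summable_on A"
  shows "(\<lambda>x. \<Sum>i\<in>I. f i x) summable_on A"
  using has_sum_sum_fin[OF assms(1), where f=f and s="\<lambda>i. infsum (f i) A" and A=A] assms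
  by (meson has_sum_infsum summable_on_def)

lemma infsum_sum_fin:
  fixes f :: "'i \<Rightarrow> 'a \<Rightarrow> real"
  assumes "finite I" "\<And>i. i \<in> I \<Longrightarrow> f i summable_on A"
  shows "(\<Sum>\<^sub>\<infinity>x\<in>A. \<Sum>i\<in>I. f i x) = (\<Sum>i\<in>I. \<Sum>\<^sub>\<infinity>x\<in>A. f i x)"
  using has_sum_sum_fin[OF assms(1), where f=f and s="\<lambda>i. infsum (f i) A" and A=A] assms
  by (simp add: infsumI)

lemma kl_summable:
  fixes P Q :: "'a \<Rightarrow> real"
  assumes P0: "\<And>t. 0 \<le> P t" and Q0: "\<And>t. 0 \<le> Q t"
    and Ps: "P summable_on UNIV" and Qs: "Q summable_on UNIV"
    and pos: "\<And>t. P t \<noteq> 0 \<Longrightarrow> 0 < Q t"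
    and c: "0 < c" and bnd: "\<And>t. P t \<le> c * Q t"
  shows "(\<lambda>t. P t * ln (P t / Q t)) summable_on UNIV"
proof -
  let ?g = "\<lambda>t. P t * \<bar>ln c\<bar> + Q t"
  have gs: "?g summable_on UNIV"
    using Ps Qs by (intro summable_on_add summable_on_cmult_left) auto
  have "(\<lambda>t. norm (P t * ln (P t / Q t))) summable_on UNIV"
  proof (rule Infinite_Sum.abs_summable_on_comparison_test)
    show "(\<lambda>t. norm (?g t)) summable_on UNIV" using gs summable_on_iff_abs_summable_on_real[of ?g UNIV] by simp
    fix t
    show "norm (P t * ln (P t / Q t)) \<le> norm (?g t)"
    proof (cases "P t = 0")
      case True then show ?thesis using Q0[of t] P0[of t] by (simp del: abs_mult)
    next
      case False
      then have p: "0 < P t" and q: "0 < Q t" using P0[of t] pos[of t] by auto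
      have lo: "P t - Q t \<le> P t * ln (P t / Q t)" using xlnx_lower[OF p q] .
      have "P t / Q t \<le> c" using bnd[of t] q by (simp add: divide_le_eq)
      then have "ln (P t / Q t) \<le> ln c" using p q c by simp
      then have "P t * ln (P t / Q t) \<le> P t * \<bar>ln c\<bar>"
        using p by (intro mult_left_mono) auto
      moreover have "0 \<le> P t * \<bar>ln c\<bar>" using p by simp
      ultimately show ?thesis using lo p q unfolding real_norm_def by linarith
    qed
  qed
  then show ?thesis using summable_on_iff_abs_summable_on_real[of "\<lambda>t. P t * ln (P t / Q t)" UNIV] by simp
qed

lemma gibbs:
  fixes P Q :: "'a \<Rightarrow> real"
  assumes P0: "\<And>t. 0 \<le> P t" and Q0: "\<And>t. 0 \<le> Q t"
    and Ps: "(P has_sum 1) UNIV" and Qs: "(Q has_sum 1) UNIV"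
    and pos: "\<And>t. P t \<noteq> 0 \<Longrightarrow> 0 < Q t"
    and fs: "(\<lambda>t. P t * ln (P t / Q t)) summable_on UNIV"
  shows "0 \<le> (\<Sum>\<^sub>\<infinity>t. P t * ln (P t / Q t))"
    and "(\<Sum>\<^sub>\<infinity>t. P t * ln (P t / Q t)) = 0 \<Longrightarrow> P = Q"
proof -
  define D where "D t = P t * ln (P t / Q t) - P t + Q t" for t
  have D0: "0 \<le> D t" for t
  proof (cases "P t = 0")
    case True then show ?thesis using Q0[of t] by (simp add: D_def)
  next
    case False
    then have p: "0 < P t" and q: "0 < Q t" using P0[of t] pos[of t] by auto
    show ?thesis using xlnx_lower[OF p q] by (simp add: D_def)
  qed
  have h1: "((\<lambda>t. P t * ln (P t / Q t)) has_sum (\<Sum>\<^sub>\<infinity>t. P t * ln (P t / Q t))) UNIV"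
    using fs by (rule has_sum_infsum)
  have h2: "((\<lambda>t. - P t) has_sum -1) UNIV" using has_sum_uminus[of P UNIV "-1"] Ps by simp
  have Dh: "(D has_sum ((\<Sum>\<^sub>\<infinity>t. P t * ln (P t / Q t)) + -1 + 1)) UNIV"
    unfolding D_def diff_conv_add_uminus
    by (intro has_sum_add h1 h2 Qs)
  then have Dsum: "(D has_sum (\<Sum>\<^sub>\<infinity>t. P t * ln (P t / Q t))) UNIV" by simp
  then show "0 \<le> (\<Sum>\<^sub>\<infinity>t. P t * ln (P t / Q t))"
    using has_sum_nonneg D0 by blast
  assume z: "(\<Sum>\<^sub>\<infinity>t. P t * ln (P t / Q t)) = 0"
  show "P = Q"
  proof
    fix t
    have "sum D {t} \<le> (\<Sum>\<^sub>\<infinity>t. P t * ln (P t / Q t))"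
      by (rule finite_sum_le_has_sum[OF Dsum]) (auto simp: D0)
    then have "D t = 0" using D0[of t] z by simp
    show "P t = Q t"
    proof (cases "P t = 0")
      case True then show ?thesis using \<open>D t = 0\<close> by (simp add: D_def)
    next
      case False
      then have p: "0 < P t" and q: "0 < Q t" using P0[of t] pos[of t] by auto
      show ?thesis using xlnx_eq[OF p q] \<open>D t = 0\<close> by (simp add: D_def)
    qed
  qed
qed

lemma logsum:
  fixes \<alpha> \<beta> :: "'a \<Rightarrow> real"
  assumes S: "finite S" and a0: "\<And>a. a \<in> S \<Longrightarrow> 0 \<le> \<alpha> a" and b0: "\<And>a. a \<in> S \<Longrightarrow> 0 \<le> \<beta> a"
    and pos: "\<And>a. a \<in> S \<Longrightarrow> \<alpha> a \<noteq> 0 \<Longrightarrow> 0 < \<beta> a"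
  shows "(\<Sum>a\<in>S. \<alpha> a) * ln ((\<Sum>a\<in>S. \<alpha> a) / (\<Sum>a\<in>S. \<beta> a)) \<le> (\<Sum>a\<in>S. \<alpha> a * ln (\<alpha> a / \<beta> a))"
proof (cases "(\<Sum>a\<in>S. \<alpha> a) = 0")
  case True
  then have "\<forall>a\<in>S. \<alpha> a = 0" using sum_nonneg_eq_0_iff[OF S] a0 by blast
  then show ?thesis using True by simp
next
  case False
  define A where "A = (\<Sum>a\<in>S. \<alpha> a)"
  define B where "B = (\<Sum>a\<in>S. \<beta> a)"
  have A: "0 < A" using False a0 sum_nonneg[of S \<alpha>] unfolding A_def by fastforce
  have "\<exists>a\<in>S. \<alpha> a \<noteq> 0"
  proof (rule ccontr)
    assume "\<not> (\<exists>a\<in>S. \<alpha> a \<noteq> 0)"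
    then have "(\<Sum>a\<in>S. \<alpha> a) = 0" by simp
    then show False using False by simp
  qed
  then obtain a1 where a1: "a1 \<in> S" "\<alpha> a1 \<noteq> 0" by blast
  have B: "0 < B" unfolding B_def
    using pos[OF a1] b0 member_le_sum[OF a1(1) _ S, of \<beta>] by fastforce
  have pt: "\<alpha> a * ln (\<alpha> a / \<beta> a) - \<alpha> a * ln (A / B) \<ge> \<alpha> a - \<beta> a * A / B" if "a \<in> S" for a
  proof (cases "\<alpha> a = 0")
    case True then show ?thesis using b0[OF that] A B by simp
  next
    case False
    then have al: "0 < \<alpha> a" and be: "0 < \<beta> a" using a0[OF that] pos[OF that] by auto
    have "\<alpha> a - \<beta> a * A / B \<le> \<alpha> a * ln (\<alpha> a / (\<beta> a * A / B))"
      by (rule xlnx_lower[OF al]) (use be A B in simp)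
    also have "ln (\<alpha> a / (\<beta> a * A / B)) = ln (\<alpha> a / \<beta> a) - ln (A / B)"
      using al be A B by (simp add: ln_div ln_mult)
    finally show ?thesis by (simp add: algebra_simps)
  qed
  have "(\<Sum>a\<in>S. \<alpha> a - \<beta> a * A / B) \<le> (\<Sum>a\<in>S. \<alpha> a * ln (\<alpha> a / \<beta> a) - \<alpha> a * ln (A / B))"
    using pt by (intro sum_mono) auto
  also have "\<dots> = (\<Sum>a\<in>S. \<alpha> a * ln (\<alpha> a / \<beta> a)) - A * ln (A / B)"
    unfolding sum_subtractf A_def by (simp add: sum_distrib_right)
  finally have 1: "(\<Sum>a\<in>S. \<alpha> a - \<beta> a * A / B) \<le> (\<Sum>a\<in>S. \<alpha> a * ln (\<alpha> a / \<beta> a)) - A * ln (A / B)" .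
  have "(\<Sum>a\<in>S. \<beta> a * A / B) = (\<Sum>a\<in>S. \<beta> a) * A / B"
    by (simp add: sum_divide_distrib sum_distrib_right)
  then have "(\<Sum>a\<in>S. \<alpha> a - \<beta> a * A / B) = A - B * A / B"
    unfolding sum_subtractf A_def B_def by simp
  also have "\<dots> = 0" using B by simp
  finally have "(\<Sum>a\<in>S. \<alpha> a - \<beta> a * A / B) = 0" .
  with 1 have "A * ln (A / B) \<le> (\<Sum>a\<in>S. \<alpha> a * ln (\<alpha> a / \<beta> a))" by linarith
  then show ?thesis by (simp only: A_def B_def)
qed



definition Qf :: "('a \<Rightarrow> real) \<Rightarrow> ('a \<Rightarrow> 'a) \<Rightarrow> nat \<Rightarrow> 'a \<Rightarrow> real" where
  "Qf p g N a = (\<Sum>i<N. p ((g ^^ i) a))"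

definition avgk :: "('a \<Rightarrow> real) \<Rightarrow> ('a \<Rightarrow> 'a) \<Rightarrow> nat \<Rightarrow> ('a \<Rightarrow> 'b \<Rightarrow> real) \<Rightarrow> 'a \<Rightarrow> 'b \<Rightarrow> real" where
  "avgk p g N \<kappa> a t = (\<Sum>i<N. p ((g ^^ i) a) * \<kappa> ((g ^^ i) a) t) / Qf p g N a"

definition Phi :: "('a \<Rightarrow> real) \<Rightarrow> ('a \<Rightarrow> 'a) \<Rightarrow> nat \<Rightarrow> ('a \<Rightarrow> real) \<Rightarrow> 'a \<Rightarrow> real" where
  "Phi p g N r b = p b / Qf p g N b * (\<Sum>i<N. r ((g ^^ (N - i)) b))"

lemma sum_shift_periodic:
  fixes f :: "nat \<Rightarrow> 'b::ab_group_add"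
  assumes "f N = f 0"
  shows "(\<Sum>i<N. f (Suc i)) = (\<Sum>i<N. f i)"
proof -
  have "(\<Sum>i<Suc N. f i) = f 0 + (\<Sum>i<N. f (Suc i))" by (rule sum.lessThan_Suc_shift)
  moreover have "(\<Sum>i<Suc N. f i) = (\<Sum>i<N. f i) + f N" by simp
  ultimately show ?thesis using assms by (simp add: algebra_simps)
qed

lemma sum_rev_periodic:
  fixes f :: "nat \<Rightarrow> 'b::ab_group_add"
  assumes "f N = f 0"
  shows "(\<Sum>i<N. f (N - i)) = (\<Sum>i<N. f i)"
proof -
  have "(\<Sum>i<N. f (N - i)) = (\<Sum>i<N. f (Suc (N - Suc i)))"
    by (intro sum.cong) (auto simp: Suc_diff_Suc)
  also have "\<dots> = (\<Sum>i<N. f (Suc i))"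
    using sum.nat_diff_reindex[of "\<lambda>i. f (Suc i)" N] by simp
  also have "\<dots> = (\<Sum>i<N. f i)" using sum_shift_periodic[OF assms] .
  finally show ?thesis .
qed

context
  fixes g :: "'a::finite \<Rightarrow> 'a" and N :: nat
  assumes gb: "bij g" and gN: "g ^^ N = id" and N0: "0 < N"
begin

lemma per_fun: "(g ^^ N) a = a" using gN by simp

lemma Qf_g: "Qf p g N (g a) = Qf p g N a"
proof -
  have "Qf p g N (g a) = (\<Sum>i<N. p ((g ^^ Suc i) a))"
    unfolding Qf_def by (simp add: funpow_Suc_right del: funpow.simps)
  also have "\<dots> = Qf p g N a" unfolding Qf_def
    by (rule sum_shift_periodic) (simp add: per_fun)
  finally show ?thesis .
qed

lemma Qf_pow: "Qf p g N ((g ^^ j) a) = Qf p g N a"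
  by (induction j) (simp_all add: Qf_g)

lemma avgk_g: "avgk p g N \<kappa> (g a) t = avgk p g N \<kappa> a t"
proof -
  have "(\<Sum>i<N. p ((g ^^ i) (g a)) * \<kappa> ((g ^^ i) (g a)) t)
      = (\<Sum>i<N. p ((g ^^ Suc i) a) * \<kappa> ((g ^^ Suc i) a) t)"
    by (simp add: funpow_Suc_right del: funpow.simps)
  also have "\<dots> = (\<Sum>i<N. p ((g ^^ i) a) * \<kappa> ((g ^^ i) a) t)"
    by (rule sum_shift_periodic[where f = "\<lambda>i. p ((g ^^ i) a) * \<kappa> ((g ^^ i) a) t"]) (simp add: per_fun)
  finally show ?thesis unfolding avgk_def Qf_g by simp
qed

lemma inv_pow: "h (g a) = h a \<Longrightarrow> (\<And>a. h (g a) = h a) \<Longrightarrow> h ((g ^^ j) a) = h a"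
  by (induction j) auto

lemma sum_p_rev: "(\<Sum>i<N. p ((g ^^ (N - i)) b)) = Qf p g N b"
  unfolding Qf_def by (rule sum_rev_periodic[where f = "\<lambda>i. p ((g ^^ i) b)"]) (simp add: per_fun)

lemma comp_back: "i < N \<Longrightarrow> (g ^^ i) ((g ^^ (N - i)) b) = b"
proof -
  assume "i < N"
  have "(g ^^ i) ((g ^^ (N - i)) b) = (g ^^ (i + (N - i))) b" by (simp only: funpow_add o_apply)
  also have "\<dots> = b" using \<open>i < N\<close> per_fun by simp
  finally show ?thesis .
qed

lemma AV:
  fixes \<phi> \<psi> :: "'a \<Rightarrow> real"
  shows "(\<Sum>a\<in>UNIV. \<phi> a * ((\<Sum>i<N. p ((g ^^ i) a) * \<psi> ((g ^^ i) a)) / Qf p g N a))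
       = (\<Sum>b\<in>UNIV. \<psi> b * Phi p g N \<phi> b)"
proof -
  have "(\<Sum>a\<in>UNIV. \<phi> a * ((\<Sum>i<N. p ((g ^^ i) a) * \<psi> ((g ^^ i) a)) / Qf p g N a))
      = (\<Sum>a\<in>UNIV. \<Sum>i<N. \<phi> a * p ((g ^^ i) a) * \<psi> ((g ^^ i) a) / Qf p g N a)"
    by (simp add: sum_divide_distrib sum_distrib_left mult.assoc)
  also have "\<dots> = (\<Sum>i<N. \<Sum>a\<in>UNIV. \<phi> a * p ((g ^^ i) a) * \<psi> ((g ^^ i) a) / Qf p g N a)"
    by (rule sum.swap)
  also have "\<dots> = (\<Sum>i<N. \<Sum>b\<in>UNIV. \<phi> ((g ^^ (N - i)) b) * p b * \<psi> b / Qf p g N b)"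
  proof (rule sum.cong[OF refl])
    fix i assume i: "i \<in> {..<N}"
    have bb: "bij_betw (g ^^ (N - i)) UNIV UNIV" using gb bij_fn by auto
    have "(\<Sum>a\<in>UNIV. \<phi> a * p ((g ^^ i) a) * \<psi> ((g ^^ i) a) / Qf p g N a)
        = (\<Sum>b\<in>UNIV. \<phi> ((g ^^ (N - i)) b) * p ((g ^^ i) ((g ^^ (N - i)) b)) * \<psi> ((g ^^ i) ((g ^^ (N - i)) b)) / Qf p g N ((g ^^ (N - i)) b))"
      by (rule sum.reindex_bij_betw[OF bb, symmetric])
    also have "\<dots> = (\<Sum>b\<in>UNIV. \<phi> ((g ^^ (N - i)) b) * p b * \<psi> b / Qf p g N b)"
      using i by (simp add: comp_back Qf_pow)
    finally show "(\<Sum>a\<in>UNIV. \<phi> a * p ((g ^^ i) a) * \<psi> ((g ^^ i) a) / Qf p g N a)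
        = (\<Sum>b\<in>UNIV. \<phi> ((g ^^ (N - i)) b) * p b * \<psi> b / Qf p g N b)" .
  qed
  also have "\<dots> = (\<Sum>b\<in>UNIV. \<Sum>i<N. \<phi> ((g ^^ (N - i)) b) * p b * \<psi> b / Qf p g N b)"
    by (rule sum.swap)
  also have "\<dots> = (\<Sum>b\<in>UNIV. \<psi> b * Phi p g N \<phi> b)"
    unfolding Phi_def
    by (intro sum.cong refl) (simp add: sum_distrib_left sum_distrib_right sum_divide_distrib algebra_simps)
  finally show ?thesis .
qed

end



lemma sum_pair: "(\<Sum>a\<in>(UNIV::('x::finite \<times> 'y::finite) set). f a) = (\<Sum>x\<in>UNIV. \<Sum>y\<in>UNIV. f (x, y))"
  by (simp add: sum.cartesian_product UNIV_Times_UNIV[symmetric] del: UNIV_Times_UNIV)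

lemma period_exists:
  fixes g :: "'a::finite \<Rightarrow> 'a"
  assumes "bij g"
  shows "\<exists>N>0. g ^^ N = id"
proof -
  have "finite (range (\<lambda>n::nat. g ^^ n))" by simp
  then have "\<not> inj (\<lambda>n::nat. g ^^ n)" using finite_imageD infinite_UNIV_nat by blast
  then obtain i j :: nat where ij: "i \<noteq> j" "g ^^ i = g ^^ j" unfolding inj_def by blast
  have "\<exists>i j::nat. i < j \<and> g ^^ i = g ^^ j"
    using ij by (metis linorder_neqE_nat)
  then obtain i j :: nat where ij: "i < j" "g ^^ i = g ^^ j" by blast
  have ig: "inj (g ^^ i)" using assms bij_is_inj inj_fn by blast
  have "g ^^ (j - i) = id"
  proof
    fix x
    have "(g ^^ i) ((g ^^ (j - i)) x) = (g ^^ (i + (j - i))) x" by (simp only: funpow_add o_apply)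
    also have "\<dots> = (g ^^ i) x" using ij by simp
    finally show "(g ^^ (j - i)) x = id x" using ig by (simp add: inj_eq)
  qed
  then show ?thesis using ij by (intro exI[of _ "j - i"]) auto
qed

lemma map_prod_pow_pt:
  fixes \<sigma> :: "'a \<Rightarrow> 'a" and \<tau> :: "'b \<Rightarrow> 'b"
  shows "(map_prod \<sigma> \<tau> ^^ k) (x, y) = ((\<sigma> ^^ k) x, (\<tau> ^^ k) y)"
proof (induction k)
  case 0 show ?case by simp
next
  case (Suc k)
  have "(map_prod \<sigma> \<tau> ^^ Suc k) (x, y) = map_prod \<sigma> \<tau> ((map_prod \<sigma> \<tau> ^^ k) (x, y))" by simp
  also have "\<dots> = ((\<sigma> ^^ Suc k) x, (\<tau> ^^ Suc k) y)" using Suc by simp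
  finally show ?case .
qed

lemma map_prod_pow:
  fixes \<sigma> :: "'a \<Rightarrow> 'a" and \<tau> :: "'b \<Rightarrow> 'b"
  shows "map_prod \<sigma> \<tau> ^^ k = map_prod (\<sigma> ^^ k) (\<tau> ^^ k)"
  by (rule ext) (auto simp: map_prod_pow_pt)

lemma chan_comp_det: "chan_comp \<kappa> (det_chan f) = (\<lambda>a. \<kappa> (f a))"
proof (intro ext)
  fix a c
  show "chan_comp \<kappa> (det_chan f) a c = \<kappa> (f a) c"
    unfolding chan_comp_def det_chan_def
    by (simp add: if_distrib[of "\<lambda>x. _ * x"] sum.delta' cong: if_cong)
qed

definition Ecl :: "('x::finite \<times> 'y::finite \<Rightarrow> real) set" where
  "Ecl = {f. (\<forall>x y y'. f (x, y) = f (x, y')) \<and> (\<forall>a. 0 \<le> f a) \<and> sum f UNIV = 1}"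

lemma E_ce_sub_Ecl: "E_ce \<subseteq> Ecl"
proof
  fix f :: "'x::finite \<times> 'y::finite \<Rightarrow> real" assume "f \<in> E_ce"
  then obtain r where r: "r \<in> prob_simplex" "f = (\<lambda>(x, y). r x / real CARD('y))"
    unfolding E_ce_def by auto
  have "sum f UNIV = (\<Sum>x\<in>UNIV. \<Sum>y\<in>(UNIV::'y set). r x / real CARD('y))"
    unfolding sum_pair r(2) by simp
  also have "\<dots> = sum r UNIV" by simp
  also have "\<dots> = 1" using r(1) unfolding prob_simplex_def by simp
  finally show "f \<in> Ecl"
    using r unfolding prob_simplex_def Ecl_def by auto
qed

lemma Ecl_closed: "closed (Ecl :: ('x::finite \<times> 'y::finite \<Rightarrow> real) set)"
proof -
  have c1: "closed {f::'x \<times> 'y \<Rightarrow> real. \<forall>x y y'. f (x, y) = f (x, y')}"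
    by (intro closed_Collect_all closed_Collect_eq continuous_on_product_coordinates)
  have c2: "closed {f::'x \<times> 'y \<Rightarrow> real. \<forall>a. 0 \<le> f a}"
    by (intro closed_Collect_all closed_Collect_le continuous_on_const continuous_on_product_coordinates)
  have c3: "closed {f::'x \<times> 'y \<Rightarrow> real. sum f UNIV = 1}"
    by (intro closed_Collect_eq continuous_on_sum continuous_on_const continuous_on_product_coordinates)
  have eq: "(Ecl :: ('x \<times> 'y \<Rightarrow> real) set)
     = {f::'x \<times> 'y \<Rightarrow> real. \<forall>x y y'. f (x, y) = f (x, y')} \<inter> {f. \<forall>a. 0 \<le> f a} \<inter> {f. sum f UNIV = 1}"
    unfolding Ecl_def by auto
  show ?thesis unfolding eq by (intro closed_Int c1 c2 c3)
qed

lemma closure_E_ce: "closure (E_ce :: ('x::finite \<times> 'y::finite \<Rightarrow> real) set) \<subseteq> Ecl"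
  by (rule closure_minimal[OF E_ce_sub_Ecl Ecl_closed])



context
  fixes p :: "'x::finite \<times> 'y::finite \<Rightarrow> real" and \<sigma> :: "'x \<Rightarrow> 'x" and \<tau> :: "'y \<Rightarrow> 'y"
    and N :: nat
  assumes fs: "full_support p" and G: "(\<sigma>, \<tau>) \<in> G_ce p"
    and gN: "map_prod \<sigma> \<tau> ^^ N = id" and N0: "0 < N"
begin

abbreviation "gg \<equiv> map_prod \<sigma> \<tau>"

lemma ppos: "0 < p a" using fs unfolding full_support_def by blast
lemma psum: "sum p UNIV = 1" using fs unfolding full_support_def prob_simplex_def by auto
lemma bsig: "bij \<sigma>" and btau: "bij \<tau>" and cinv: "\<And>x y. cond_prob p (\<sigma> x) (\<tau> y) = cond_prob p x y"
  using G unfolding G_ce_def by auto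
lemma gbij: "bij gg"
  using bsig btau by (simp add: bij_betw_map_prod[of \<sigma> UNIV UNIV \<tau> UNIV UNIV] UNIV_Times_UNIV[symmetric] del: UNIV_Times_UNIV)

definition PX :: "'x \<Rightarrow> real" where "PX x = (\<Sum>y\<in>UNIV. p (x, y))"

lemma PX_pos: "0 < PX x"
  unfolding PX_def by (rule sum_pos) (auto simp: ppos)

lemma p_eq: "p (x, y) = PX x * cond_prob p x y"
  using PX_pos[of x] unfolding cond_prob_def PX_def[symmetric] by simp

lemma cond_pow: "cond_prob p ((\<sigma> ^^ j) x) ((\<tau> ^^ j) y) = cond_prob p x y"
  by (induction j) (simp_all add: cinv)

lemma cond_pos: "0 < cond_prob p x y"
  using ppos[of "(x,y)"] PX_pos[of x] p_eq[of x y] by (simp add: zero_less_mult_iff)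

lemma Q_pos: "0 < Qf p gg N a"
proof -
  have "p ((gg ^^ 0) a) \<le> Qf p gg N a"
    unfolding Qf_def by (rule member_le_sum) (use N0 in \<open>auto intro: less_imp_le[OF ppos]\<close>)
  then show ?thesis using ppos[of a] by simp
qed

lemma p_le_Q: "p a \<le> Qf p gg N a"
proof -
  have "p ((gg ^^ 0) a) \<le> Qf p gg N a"
    unfolding Qf_def by (rule member_le_sum) (use N0 in \<open>auto intro: less_imp_le[OF ppos]\<close>)
  then show ?thesis by simp
qed

lemma Phi_p: "Phi p gg N p = p"
proof
  fix b
  show "Phi p gg N p b = p b"
    unfolding Phi_def sum_p_rev[OF gbij gN N0] using Q_pos[of b] by simp
qed

lemma Phi_E: assumes "r \<in> E_ce" shows "Phi p gg N r \<in> E_ce"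
proof -
  obtain r0 where r0: "r0 \<in> prob_simplex" "r = (\<lambda>(x, y). r0 x / real CARD('y))"
    using assms unfolding E_ce_def by auto
  define S where "S x = (\<Sum>i<N. PX ((\<sigma> ^^ i) x))" for x
  define r1 where "r1 x = PX x / S x * (\<Sum>i<N. r0 ((\<sigma> ^^ (N - i)) x))" for x
  have S_pos: "0 < S x" for x
    unfolding S_def by (rule sum_pos) (use N0 PX_pos in auto)
  have Q_eq: "Qf p gg N (x, y) = cond_prob p x y * S x" for x y
    unfolding Qf_def S_def map_prod_pow map_prod_simp
    by (simp add: p_eq cond_pow sum_distrib_left mult.commute)
  have Phi_eq: "Phi p gg N r = (\<lambda>(x, y). r1 x / real CARD('y))"
  proof (intro ext, clarify)
    fix x y
    have c: "0 < cond_prob p x y" by (rule cond_pos)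
    have "Phi p gg N r (x, y) = p (x, y) / Qf p gg N (x, y) * (\<Sum>i<N. r0 ((\<sigma> ^^ (N - i)) x) / real CARD('y))"
      unfolding Phi_def r0(2) map_prod_pow by simp
    also have "\<dots> = r1 x / real CARD('y)"
      unfolding Q_eq p_eq r1_def using c S_pos[of x]
      by (simp add: sum_divide_distrib[symmetric] field_simps)
    finally show "Phi p gg N r (x, y) = r1 x / real CARD('y)" .
  qed
  have sumPhi: "sum (Phi p gg N r) UNIV = sum r UNIV"
  proof -
    have e1: "(\<Sum>a\<in>UNIV. r a * ((\<Sum>i<N. p ((gg ^^ i) a) * 1) / Qf p gg N a)) = (\<Sum>b\<in>UNIV. 1 * Phi p gg N r b)"
      by (rule AV[OF gbij gN N0])
    have e2: "(\<Sum>i<N. p ((gg ^^ i) a)) / Qf p gg N a = 1" for a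
      using Q_pos[of a] unfolding Qf_def by simp
    from e1 show ?thesis by (simp only: mult_1_right mult_1_left e2)
  qed
  have sr: "sum r UNIV = 1"
    unfolding r0(2) sum_pair using r0(1) by (simp add: prob_simplex_def)
  have "sum r1 UNIV = 1"
  proof -
    have "sum (Phi p gg N r) UNIV = (\<Sum>x\<in>UNIV. \<Sum>y\<in>(UNIV::'y set). r1 x / real CARD('y))"
      unfolding Phi_eq sum_pair by simp
    also have "\<dots> = sum r1 UNIV" by simp
    finally show ?thesis using sumPhi sr by simp
  qed
  moreover have "0 \<le> r1 x" for x
    using r0(1) PX_pos[of x] S_pos[of x] unfolding r1_def prob_simplex_def
    by (intro mult_nonneg_nonneg sum_nonneg divide_nonneg_nonneg) auto
  ultimately have "r1 \<in> prob_simplex" unfolding prob_simplex_def by auto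
  then show ?thesis unfolding Phi_eq E_ce_def by (intro CollectI exI[of _ r1] conjI refl)
qed

lemma Phi_cont: "continuous_on UNIV (Phi p gg N)"
  unfolding Phi_def[abs_def]
proof (rule continuous_on_coordinatewise_then_product)
  fix b
  show "continuous_on UNIV (\<lambda>r. p b / Qf p gg N b * (\<Sum>i<N. r ((gg ^^ (N - i)) b)))"
    by (rule continuous_on_mult_left, rule continuous_on_sum) simp
qed

lemma Phi_closure: assumes "r \<in> closure E_ce" shows "Phi p gg N r \<in> closure E_ce"
proof -
  have "Phi p gg N ` closure E_ce \<subseteq> closure E_ce"
  proof (rule image_closure_subset)
    show "continuous_on (closure E_ce) (Phi p gg N)"
      using Phi_cont continuous_on_subset by blast
    show "Phi p gg N ` E_ce \<subseteq> closure E_ce"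
      using Phi_E closure_subset by blast
  qed simp
  then show ?thesis using assms by blast
qed

lemma push_avg: "push (avgk p gg N \<kappa>) r = push \<kappa> (Phi p gg N r)"
proof
  fix t
  show "push (avgk p gg N \<kappa>) r t = push \<kappa> (Phi p gg N r) t"
  proof -
    have "push (avgk p gg N \<kappa>) r t = (\<Sum>a\<in>UNIV. r a * ((\<Sum>i<N. p ((gg ^^ i) a) * \<kappa> ((gg ^^ i) a) t) / Qf p gg N a))"
      unfolding push_def avgk_def by (rule sum.cong[OF refl]) (rule mult.commute)
    also have "\<dots> = (\<Sum>b\<in>UNIV. \<kappa> b t * Phi p gg N r b)" by (rule AV[OF gbij gN N0])
    also have "\<dots> = push \<kappa> (Phi p gg N r) t" unfolding push_def ..
    finally show ?thesis .
  qed
qed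

lemma push_avg_p: "push (avgk p gg N \<kappa>) p = push \<kappa> p"
  by (simp only: push_avg Phi_p)

lemma D_avg: "D_push_fam \<kappa> p E_ce \<le> D_push_fam (avgk p gg N \<kappa>) p E_ce"
  unfolding D_push_fam_def push_avg Phi_p
proof (rule INF_mono, goal_cases)
  case (1 r)
  then show ?case
    by (intro bexI[of _ "Phi p gg N r"] order_refl Phi_closure)
qed

lemma avg_channel: assumes "is_channel \<kappa>" shows "is_channel (avgk p gg N \<kappa>)"
proof -
  have k0: "0 \<le> \<kappa> a t" and k1: "(\<kappa> a has_sum 1) UNIV" for a t using assms unfolding is_channel_def by blast+
  have "0 \<le> avgk p gg N \<kappa> a t" for a t
  proof -
    have "0 \<le> p ((gg ^^ i) a) * \<kappa> ((gg ^^ i) a) t" for i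
      using ppos[of "(gg ^^ i) a"] k0[of "(gg ^^ i) a" t] by simp
    then have "0 \<le> (\<Sum>i<N. p ((gg ^^ i) a) * \<kappa> ((gg ^^ i) a) t)" by (rule sum_nonneg)
    then show ?thesis unfolding avgk_def using Q_pos[of a] by simp
  qed
  moreover have "(avgk p gg N \<kappa> a has_sum 1) UNIV" for a
  proof -
    have "((\<lambda>t. \<Sum>i<N. p ((gg ^^ i) a) / Qf p gg N a * \<kappa> ((gg ^^ i) a) t) has_sum
            (\<Sum>i<N. p ((gg ^^ i) a) / Qf p gg N a * 1)) UNIV"
      by (intro has_sum_sum_fin has_sum_cmult_right k1) simp
    moreover have "(\<Sum>i<N. p ((gg ^^ i) a) / Qf p gg N a * 1) = 1"
      using Q_pos[of a] by (simp add: sum_divide_distrib[symmetric] Qf_def[symmetric])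
    moreover have "(\<lambda>t. \<Sum>i<N. p ((gg ^^ i) a) / Qf p gg N a * \<kappa> ((gg ^^ i) a) t) = avgk p gg N \<kappa> a"
      unfolding avgk_def by (auto simp: sum_divide_distrib)
    ultimately show ?thesis by simp
  qed
  ultimately show ?thesis unfolding is_channel_def by auto
qed

lemma inv_main:
  assumes K: "\<kappa> \<in> DIB_ce p lam"
  shows "\<kappa> (gg a0) = \<kappa> a0"
proof -
  have ch: "is_channel \<kappa>" and lamF: "lam \<le> D_push_fam \<kappa> p E_ce"
    and minI: "\<And>\<kappa>'. is_channel \<kappa>' \<Longrightarrow> lam \<le> D_push_fam \<kappa>' p E_ce \<Longrightarrow> mutual_info p \<kappa> \<le> mutual_info p \<kappa>'"
    using K unfolding DIB_ce_def by blast+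
  define k2 where "k2 = avgk p gg N \<kappa>"
  define m where "m = push \<kappa> p"
  have k0: "0 \<le> \<kappa> a t" and k1: "(\<kappa> a has_sum 1) UNIV" for a t using ch unfolding is_channel_def by blast+
  have k2ch: "is_channel k2" unfolding k2_def by (rule avg_channel[OF ch])
  have k20: "0 \<le> k2 a t" and k21: "(k2 a has_sum 1) UNIV" for a t using k2ch unfolding is_channel_def by blast+
  have kp0: "0 \<le> \<kappa> a t * p a" and pk0: "0 \<le> p a * \<kappa> a t" for a t
    using k0[of a t] ppos[of a] by simp_all
  have m2: "m t = (\<Sum>b\<in>UNIV. \<kappa> b t * p b)" for t unfolding m_def push_def ..
  have m0: "0 \<le> m t" for t unfolding m2 by (intro sum_nonneg kp0)
  have ms: "m summable_on UNIV"
  proof -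
    have "(\<lambda>t. \<Sum>b\<in>UNIV. \<kappa> b t * p b) summable_on UNIV"
      by (intro summable_sum_fin summable_on_cmult_left) (auto intro: has_sum_imp_summable[OF k1])
    moreover have "m = (\<lambda>t. \<Sum>b\<in>UNIV. \<kappa> b t * p b)" by (rule ext) (rule m2)
    ultimately show ?thesis by simp
  qed
  have ks: "\<kappa> a summable_on UNIV" for a by (rule has_sum_imp_summable[OF k1])
  have k2s: "k2 a summable_on UNIV" for a by (rule has_sum_imp_summable[OF k21])
  have km: "\<kappa> a t * p a \<le> m t" for a t
    unfolding m2 by (rule member_le_sum) (auto intro: kp0)
  have k2m: "k2 a t \<le> (real N / Qf p gg N a) * m t" for a t
  proof -
    have "(\<Sum>i<N. p ((gg ^^ i) a) * \<kappa> ((gg ^^ i) a) t) \<le> of_nat (card {..<N}) * m t"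
      by (rule sum_bounded_above) (use km in \<open>simp add: mult.commute\<close>)
    then show ?thesis unfolding k2_def avgk_def using Q_pos[of a]
      by (simp add: divide_right_mono field_simps)
  qed
  have kk2: "\<kappa> a t * p a \<le> Qf p gg N a * k2 a t" for a t
  proof -
    have "p ((gg ^^ 0) a) * \<kappa> ((gg ^^ 0) a) t \<le> (\<Sum>i<N. p ((gg ^^ i) a) * \<kappa> ((gg ^^ i) a) t)"
      by (rule member_le_sum) (use N0 in \<open>auto intro: pk0\<close>)
    then show ?thesis unfolding k2_def avgk_def using Q_pos[of a] by (simp add: mult.commute)
  qed
  have posm: "0 < m t" if "\<kappa> a t \<noteq> 0" for a t
  proof -
    have "0 < \<kappa> a t * p a" using that k0[of a t] ppos[of a] by simp
    then show ?thesis using km[of a t] by simp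
  qed
  have posk2: "0 < k2 a t" if "\<kappa> a t \<noteq> 0" for a t
  proof -
    have "0 < \<kappa> a t * p a" using that k0[of a t] ppos[of a] by simp
    then have "0 < Qf p gg N a * k2 a t" using kk2[of a t] by simp
    then show ?thesis using Q_pos[of a] by (simp add: zero_less_mult_iff)
  qed
  have posm2: "0 < m t" if "k2 a t \<noteq> 0" for a t
  proof -
    have "0 < k2 a t" using that k20[of a t] by simp
    then have "0 < (real N / Qf p gg N a) * m t" using k2m[of a t] by simp
    then show ?thesis using Q_pos[of a] N0 by (simp add: zero_less_divide_iff zero_less_mult_iff)
  qed
  have s1: "(\<lambda>t. \<kappa> a t * ln (\<kappa> a t / m t)) summable_on UNIV" for a
  proof (rule kl_summable[where c = "1 / p a"])
    show "\<kappa> a t \<le> 1 / p a * m t" for t using km[of a t] ppos[of a] by (simp add: field_simps)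
  qed (use k0 m0 ks ms posm ppos in auto)
  have s2: "(\<lambda>t. k2 a t * ln (k2 a t / m t)) summable_on UNIV" for a
  proof (rule kl_summable[where c = "real N / Qf p gg N a"])
    show "0 < real N / Qf p gg N a" using N0 Q_pos[of a] by simp
  qed (use k20 m0 k2s ms posm2 k2m in auto)
  have s3: "(\<lambda>t. \<kappa> a t * ln (\<kappa> a t / k2 a t)) summable_on UNIV" for a
  proof (rule kl_summable[where c = "Qf p gg N a / p a"])
    show "\<kappa> a t \<le> Qf p gg N a / p a * k2 a t" for t using kk2[of a t] ppos[of a] by (simp add: field_simps)
    show "0 < Qf p gg N a / p a" using Q_pos[of a] ppos[of a] by simp
  qed (use k0 k20 ks k2s posk2 in auto)
  define K1 where "K1 a = (\<Sum>\<^sub>\<infinity>t. \<kappa> a t * ln (\<kappa> a t / m t))" for a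
  define K2 where "K2 a = (\<Sum>\<^sub>\<infinity>t. k2 a t * ln (k2 a t / m t))" for a
  define K3 where "K3 a = (\<Sum>\<^sub>\<infinity>t. \<kappa> a t * ln (\<kappa> a t / k2 a t))" for a
  have mi1: "mutual_info p \<kappa> = ereal (\<Sum>a\<in>UNIV. p a * K1 a)"
  proof -
    have "KL (\<kappa> a) (push \<kappa> p) = ereal (K1 a)" for a
      unfolding K1_def m_def[symmetric] by (rule KL_eq_real[OF _ s1]) (metis posm less_irrefl)
    then show ?thesis unfolding mutual_info_def by simp
  qed
  have mi2: "mutual_info p k2 = ereal (\<Sum>a\<in>UNIV. p a * K2 a)"
  proof -
    have pk2: "push k2 p = m" unfolding k2_def m_def by (rule push_avg_p)
    have "KL (k2 a) (push k2 p) = ereal (K2 a)" for a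
      unfolding K2_def pk2 by (rule KL_eq_real[OF _ s2]) (metis posm2 less_irrefl)
    then show ?thesis unfolding mutual_info_def by simp
  qed
  have "lam \<le> D_push_fam k2 p E_ce" unfolding k2_def using lamF D_avg order_trans by blast
  then have "mutual_info p \<kappa> \<le> mutual_info p k2" by (rule minI[OF k2ch])
  then have le12: "(\<Sum>a\<in>UNIV. p a * K1 a) \<le> (\<Sum>a\<in>UNIV. p a * K2 a)" using mi1 mi2 by simp
  have pt: "(\<Sum>a\<in>UNIV. p a * (\<kappa> a t * ln (\<kappa> a t / m t) - k2 a t * ln (k2 a t / m t)
                - \<kappa> a t * ln (\<kappa> a t / k2 a t))) = 0" for t
  proof -
    define L where "L a = ln (k2 a t / m t)" for a
    have Lg: "L (gg a) = L a" for a
      unfolding L_def k2_def by (simp only: avgk_g[OF gbij gN N0])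
    have LL: "L ((gg ^^ j) a) = L a" for a j by (rule inv_pow[OF gbij gN N0, of L, OF Lg Lg])
    have e: "\<kappa> a t * ln (\<kappa> a t / m t) - \<kappa> a t * ln (\<kappa> a t / k2 a t) = \<kappa> a t * L a" for a
    proof (cases "\<kappa> a t = 0")
      case True then show ?thesis by simp
    next
      case False
      have "0 < \<kappa> a t" using False k0[of a t] by simp
      moreover have "0 < m t" using posm[OF False] .
      moreover have "0 < k2 a t" using posk2[OF False] .
      ultimately show ?thesis unfolding L_def by (simp add: ln_div algebra_simps)
    qed
    have av: "(\<Sum>a\<in>UNIV. (p a * L a) * ((\<Sum>i<N. p ((gg ^^ i) a) * \<kappa> ((gg ^^ i) a) t) / Qf p gg N a))
        = (\<Sum>b\<in>UNIV. \<kappa> b t * Phi p gg N (\<lambda>a. p a * L a) b)"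
      by (rule AV[OF gbij gN N0])
    have ph: "Phi p gg N (\<lambda>a. p a * L a) b = p b * L b" for b
    proof -
      have "(\<Sum>i<N. p ((gg ^^ (N - i)) b) * L ((gg ^^ (N - i)) b)) = (\<Sum>i<N. p ((gg ^^ (N - i)) b)) * L b"
        by (simp add: LL sum_distrib_right)
      then show ?thesis unfolding Phi_def sum_p_rev[OF gbij gN N0] using Q_pos[of b] by simp
    qed
    have "(\<Sum>a\<in>UNIV. p a * k2 a t * L a) = (\<Sum>a\<in>UNIV. p a * \<kappa> a t * L a)"
    proof -
      have "(\<Sum>a\<in>UNIV. p a * k2 a t * L a) = (\<Sum>a\<in>UNIV. (p a * L a) * ((\<Sum>i<N. p ((gg ^^ i) a) * \<kappa> ((gg ^^ i) a) t) / Qf p gg N a))"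
        unfolding k2_def avgk_def by (rule sum.cong[OF refl]) (simp only: ac_simps)
      also have "\<dots> = (\<Sum>b\<in>UNIV. \<kappa> b t * (p b * L b))" unfolding av ph ..
      also have "\<dots> = (\<Sum>a\<in>UNIV. p a * \<kappa> a t * L a)" by (rule sum.cong[OF refl]) (simp only: ac_simps)
      finally show ?thesis .
    qed
    moreover have "(\<Sum>a\<in>UNIV. p a * (\<kappa> a t * ln (\<kappa> a t / m t) - k2 a t * ln (k2 a t / m t)
                - \<kappa> a t * ln (\<kappa> a t / k2 a t))) = (\<Sum>a\<in>UNIV. p a * \<kappa> a t * L a) - (\<Sum>a\<in>UNIV. p a * k2 a t * L a)"
    proof -
      have "p a * (\<kappa> a t * ln (\<kappa> a t / m t) - k2 a t * ln (k2 a t / m t) - \<kappa> a t * ln (\<kappa> a t / k2 a t))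
          = p a * \<kappa> a t * L a - p a * k2 a t * L a" for a
        using e[of a] unfolding L_def by (simp add: algebra_simps)
      then show ?thesis by (simp add: sum_subtractf)
    qed
    ultimately show ?thesis by simp
  qed
  have hs: "((\<lambda>t. p a * (\<kappa> a t * ln (\<kappa> a t / m t) - k2 a t * ln (k2 a t / m t)
                - \<kappa> a t * ln (\<kappa> a t / k2 a t))) has_sum p a * (K1 a - K2 a - K3 a)) UNIV" for a
  proof -
    have h1: "((\<lambda>t. \<kappa> a t * ln (\<kappa> a t / m t)) has_sum K1 a) UNIV" unfolding K1_def using s1 by (rule has_sum_infsum)
    have h2: "((\<lambda>t. - (k2 a t * ln (k2 a t / m t))) has_sum - K2 a) UNIV"
      unfolding K2_def has_sum_uminus using s2 by simp
    have h3: "((\<lambda>t. - (\<kappa> a t * ln (\<kappa> a t / k2 a t))) has_sum - K3 a) UNIV"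
      unfolding K3_def has_sum_uminus using s3 by simp
    have "((\<lambda>t. \<kappa> a t * ln (\<kappa> a t / m t) + - (k2 a t * ln (k2 a t / m t)) + - (\<kappa> a t * ln (\<kappa> a t / k2 a t)))
            has_sum (K1 a + - K2 a + - K3 a)) UNIV"
      by (intro has_sum_add h1 h2 h3)
    then have "((\<lambda>t. p a * (\<kappa> a t * ln (\<kappa> a t / m t) + - (k2 a t * ln (k2 a t / m t)) + - (\<kappa> a t * ln (\<kappa> a t / k2 a t))))
            has_sum p a * (K1 a + - K2 a + - K3 a)) UNIV"
      by (rule has_sum_cmult_right)
    then show ?thesis by (simp only: diff_conv_add_uminus)
  qed
  have "((\<lambda>t. \<Sum>a\<in>UNIV. p a * (\<kappa> a t * ln (\<kappa> a t / m t) - k2 a t * ln (k2 a t / m t)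
                - \<kappa> a t * ln (\<kappa> a t / k2 a t))) has_sum (\<Sum>a\<in>UNIV. p a * (K1 a - K2 a - K3 a))) UNIV"
    by (rule has_sum_sum_fin) (use hs in auto)
  then have "((\<lambda>t::nat. 0::real) has_sum (\<Sum>a\<in>UNIV. p a * (K1 a - K2 a - K3 a))) UNIV" by (simp only: pt)
  moreover have "((\<lambda>t::nat. 0::real) has_sum 0) UNIV" by (rule has_sum_0) simp
  ultimately have "(\<Sum>a\<in>UNIV. p a * (K1 a - K2 a - K3 a)) = 0" by (rule has_sum_unique)
  moreover have "(\<Sum>a\<in>UNIV. p a * (K1 a - K2 a - K3 a)) = (\<Sum>a\<in>UNIV. p a * K1 a) - (\<Sum>a\<in>UNIV. p a * K2 a) - (\<Sum>a\<in>UNIV. p a * K3 a)"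
    by (simp add: right_diff_distrib sum_subtractf)
  ultimately have ident: "(\<Sum>a\<in>UNIV. p a * K3 a) = (\<Sum>a\<in>UNIV. p a * K1 a) - (\<Sum>a\<in>UNIV. p a * K2 a)"
    by linarith
  have K3nn: "0 \<le> K3 a" for a
    unfolding K3_def by (rule gibbs(1)[OF k0 k20 k1 k21 posk2 s3])
  have "0 \<le> (\<Sum>a\<in>UNIV. p a * K3 a)"
    by (intro sum_nonneg mult_nonneg_nonneg K3nn less_imp_le[OF ppos])
  then have "(\<Sum>a\<in>UNIV. p a * K3 a) = 0"
    using ident le12 by linarith
  moreover have pK: "0 \<le> p a * K3 a" for a by (intro mult_nonneg_nonneg K3nn less_imp_le[OF ppos])
  ultimately have "\<forall>a\<in>UNIV. p a * K3 a = 0"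
    using sum_nonneg_eq_0_iff[of UNIV "\<lambda>a. p a * K3 a"] by simp
  then have K3z: "K3 a = 0" for a
  proof -
    assume "\<forall>a\<in>UNIV. p a * K3 a = 0"
    then have "p a * K3 a = 0" by blast
    then show ?thesis using ppos[of a] by simp
  qed
  have keq: "\<kappa> a = k2 a" for a
    using gibbs(2)[OF k0[of a] k20[of a] k1[of a] k21[of a] posk2[of a] s3[of a]] K3z[of a]
    unfolding K3_def by blast
  have "k2 (gg a0) = k2 a0" unfolding k2_def by (rule ext) (rule avgk_g[OF gbij gN N0])
  then show ?thesis using keq by simp
qed

end


lemma DPI:
  fixes \<kappa> :: "'a::finite \<Rightarrow> nat \<Rightarrow> real"
  assumes ch: "is_channel \<kappa>" and P0: "\<And>a. 0 \<le> P a" and R0: "\<And>a. 0 < R a"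
  shows "KL (push \<kappa> P) (push \<kappa> R) \<le> ereal (\<Sum>a\<in>UNIV. P a * ln (P a / R a))"
proof -
  have k0: "0 \<le> \<kappa> a t" and k1: "(\<kappa> a has_sum 1) UNIV" for a t using ch unfolding is_channel_def by blast+
  define mP where "mP = push \<kappa> P"
  define mR where "mR = push \<kappa> R"
  have mP2: "mP t = (\<Sum>a\<in>UNIV. \<kappa> a t * P a)" for t unfolding mP_def push_def ..
  have mR2: "mR t = (\<Sum>a\<in>UNIV. \<kappa> a t * R a)" for t unfolding mR_def push_def ..
  have kP0: "0 \<le> \<kappa> a t * P a" and kR0: "0 \<le> \<kappa> a t * R a" for a t
    using k0[of a t] P0[of a] R0[of a] by simp_all
  have mP0: "0 \<le> mP t" for t unfolding mP2 by (intro sum_nonneg kP0)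
  have mR0: "0 \<le> mR t" for t unfolding mR2 by (intro sum_nonneg kR0)
  have ks: "\<kappa> a summable_on UNIV" for a by (rule has_sum_imp_summable[OF k1])
  have mPs: "mP summable_on UNIV"
  proof -
    have "(\<lambda>t. \<Sum>a\<in>UNIV. \<kappa> a t * P a) summable_on UNIV"
      by (intro summable_sum_fin summable_on_cmult_left) (auto intro: ks)
    moreover have "mP = (\<lambda>t. \<Sum>a\<in>UNIV. \<kappa> a t * P a)" by (rule ext) (rule mP2)
    ultimately show ?thesis by simp
  qed
  have mRs: "mR summable_on UNIV"
  proof -
    have "(\<lambda>t. \<Sum>a\<in>UNIV. \<kappa> a t * R a) summable_on UNIV"
      by (intro summable_sum_fin summable_on_cmult_left) (auto intro: ks)
    moreover have "mR = (\<lambda>t. \<Sum>a\<in>UNIV. \<kappa> a t * R a)" by (rule ext) (rule mR2)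
    ultimately show ?thesis by simp
  qed
  have pos: "0 < mR t" if "mP t \<noteq> 0" for t
  proof -
    have "\<exists>a. \<kappa> a t * P a \<noteq> 0"
    proof (rule ccontr)
      assume "\<not> (\<exists>a. \<kappa> a t * P a \<noteq> 0)"
      then have "mP t = 0" unfolding mP2 by (intro sum.neutral) blast
      then show False using that by simp
    qed
    then obtain a where "\<kappa> a t * P a \<noteq> 0" by blast
    then have "0 < \<kappa> a t * R a" using k0[of a t] R0[of a] by (simp add: zero_less_mult_iff order_le_less)
    moreover have "\<kappa> a t * R a \<le> mR t" unfolding mR2 by (rule member_le_sum) (auto intro: kR0)
    ultimately show ?thesis by simp
  qed
  define c where "c = (\<Sum>a\<in>UNIV. P a / R a) + 1"
  have "0 \<le> (\<Sum>a\<in>UNIV. P a / R a)" by (intro sum_nonneg divide_nonneg_pos P0 R0)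
  then have c0: "0 < c" unfolding c_def by simp
  have cb: "P a / R a \<le> c" for a
  proof -
    have "P a / R a \<le> (\<Sum>a\<in>UNIV. P a / R a)"
      by (rule member_le_sum) (use P0 R0 in \<open>auto intro: divide_nonneg_pos\<close>)
    then show ?thesis unfolding c_def by simp
  qed
  have bnd: "mP t \<le> c * mR t" for t
  proof -
    have "\<kappa> a t * P a \<le> c * (\<kappa> a t * R a)" for a
    proof -
      have "P a \<le> c * R a" using cb[of a] R0[of a] by (simp add: divide_le_eq)
      then have "\<kappa> a t * P a \<le> \<kappa> a t * (c * R a)" using k0[of a t] by (rule mult_left_mono)
      then show ?thesis by (simp add: algebra_simps)
    qed
    then show ?thesis unfolding mP2 mR2 sum_distrib_left by (rule sum_mono)
  qed
  have fs: "(\<lambda>t. mP t * ln (mP t / mR t)) summable_on UNIV"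
    by (rule kl_summable[OF mP0 mR0 mPs mRs pos c0 bnd])
  have KLe: "KL mP mR = ereal (\<Sum>\<^sub>\<infinity>t. mP t * ln (mP t / mR t))"
    by (rule KL_eq_real[OF _ fs]) (metis pos less_irrefl)
  define h where "h t = (\<Sum>a\<in>UNIV. \<kappa> a t * (P a * ln (P a / R a)))" for t
  have hs: "(h has_sum (\<Sum>a\<in>UNIV. 1 * (P a * ln (P a / R a)))) UNIV"
    unfolding h_def[abs_def] by (intro has_sum_sum_fin has_sum_cmult_left k1) auto
  have fh: "mP t * ln (mP t / mR t) \<le> h t" for t
  proof -
    have "mP t * ln (mP t / mR t) \<le> (\<Sum>a\<in>UNIV. (\<kappa> a t * P a) * ln ((\<kappa> a t * P a) / (\<kappa> a t * R a)))"
      unfolding mP2 mR2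
    proof (rule logsum)
      fix a assume "a \<in> UNIV" "\<kappa> a t * P a \<noteq> 0"
      then have "0 < \<kappa> a t" using k0[of a t] by (cases "\<kappa> a t = 0") auto
      then show "0 < \<kappa> a t * R a" using R0[of a] by simp
    qed (auto intro: kP0 kR0)
    also have "\<dots> = h t" unfolding h_def
    proof (rule sum.cong[OF refl])
      fix a
      show "\<kappa> a t * P a * ln (\<kappa> a t * P a / (\<kappa> a t * R a)) = \<kappa> a t * (P a * ln (P a / R a))"
        by (cases "\<kappa> a t = 0") simp_all
    qed
    finally show ?thesis .
  qed
  have "(\<Sum>\<^sub>\<infinity>t. mP t * ln (mP t / mR t)) \<le> (\<Sum>\<^sub>\<infinity>t. h t)"
    by (rule infsum_mono[OF fs]) (use hs fh in \<open>auto simp: summable_on_def\<close>)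
  also have "\<dots> = (\<Sum>a\<in>UNIV. P a * ln (P a / R a))" using hs by (simp add: has_sum_iff)
  finally show ?thesis unfolding mP_def[symmetric] mR_def[symmetric] KLe by simp
qed

definition PXg :: "('x \<times> 'y::finite \<Rightarrow> real) \<Rightarrow> 'x \<Rightarrow> real" where
  "PXg p x = (\<Sum>y\<in>UNIV. p (x, y))"

lemma PXg_pos: "full_support p \<Longrightarrow> 0 < PXg p x"
  unfolding PXg_def full_support_def by (intro sum_pos) auto

lemma PXg_sum: fixes p :: "'x::finite \<times> 'y::finite \<Rightarrow> real" shows "sum (PXg p) UNIV = sum p UNIV"
  unfolding PXg_def by (rule sum_pair[symmetric])

lemma Dfam_lower:
  fixes p :: "'x::finite \<times> 'y::finite \<Rightarrow> real"
  assumes fs: "full_support p"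
  shows "ereal (\<Sum>a\<in>UNIV. p a * ln (p a / (case a of (x, y) \<Rightarrow> PXg p x / real CARD('y)))) \<le> D_fam p E_ce"
  unfolding D_fam_def
proof (rule INF_greatest)
  define C where "C = real CARD('y)"
  have C0: "0 < C" unfolding C_def by simp
  define q0 :: "'x \<times> 'y \<Rightarrow> real" where "q0 = (\<lambda>a. case a of (x, y) \<Rightarrow> PXg p x / real CARD('y))"
  have q0: "q0 (x, y) = PXg p x / C" for x y unfolding q0_def C_def by simp
  have ppos: "0 < p a" for a using fs unfolding full_support_def by blast
  have psum: "sum p UNIV = 1" using fs unfolding full_support_def prob_simplex_def by blast
  have q0pos: "0 < q0 a" for a using PXg_pos[OF fs] C0 by (cases a) (simp add: q0)
  fix r :: "'x \<times> 'y \<Rightarrow> real" assume "r \<in> closure E_ce"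
  then have rE: "r \<in> Ecl" using closure_E_ce by blast
  then have r0: "0 \<le> r a" and rc: "r (x, y) = r (x, y')" and rs: "sum r UNIV = 1" for a x y y'
    unfolding Ecl_def by blast+
  have KLr: "KL p r = (\<Sum>a\<in>UNIV. kl_term (p a) (r a))" unfolding KL_def by simp
  show "ereal (\<Sum>a\<in>UNIV. p a * ln (p a / (case a of (x, y) \<Rightarrow> PXg p x / real CARD('y)))) \<le> KL p r"
  proof (cases "\<exists>a. r a = 0")
    case True
    then obtain a where "r a = 0" by blast
    then have ka: "kl_term (p a) (r a) = \<infinity>" using ppos[of a] unfolding kl_term_def by simp
    have "KL p r = \<infinity>" unfolding KLr
      by (subst sum_Pinfty, rule conjI, simp, rule bexI[of _ a], rule ka, simp)
    then show ?thesis by simp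
  next
    case False
    have rpos: "0 < r a" for a
    proof -
      have "r a \<noteq> 0" using False by blast
      then show ?thesis using r0[of a] by simp
    qed
    have "KL p r = ereal (\<Sum>a\<in>UNIV. p a * ln (p a / r a))"
      unfolding KLr kl_term_def using ppos rpos by (simp add: less_imp_neq[symmetric])
    moreover have "(\<Sum>a\<in>UNIV. p a * ln (p a / q0 a)) \<le> (\<Sum>a\<in>UNIV. p a * ln (p a / r a))"
    proof -
      have pt: "p a - p a * r a / q0 a \<le> p a * ln (p a / r a) - p a * ln (p a / q0 a)" for a
      proof -
        have "1 - 1 / (q0 a / r a) \<le> ln (q0 a / r a)" using q0pos[of a] rpos[of a] by (intro ln_ge_1_minus_inv) simp
        then have "p a * (1 - 1 / (q0 a / r a)) \<le> p a * ln (q0 a / r a)" using ppos[of a] by (intro mult_left_mono) auto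
        moreover have "p a * (1 - 1 / (q0 a / r a)) = p a - p a * r a / q0 a" using q0pos[of a] rpos[of a] by (simp add: field_simps)
        moreover have "ln (q0 a / r a) = ln (p a / r a) - ln (p a / q0 a)"
          using q0pos[of a] rpos[of a] ppos[of a] by (simp add: ln_div)
        ultimately show ?thesis by (simp add: algebra_simps)
      qed
      have s1: "(\<Sum>a\<in>UNIV. p a * r a / q0 a) = 1"
      proof -
        have "(\<Sum>y\<in>UNIV. p (x, y) * r (x, y) / q0 (x, y)) = C * r (x, undefined)" for x
        proof -
          have "(\<Sum>y\<in>UNIV. p (x, y) * r (x, y) / q0 (x, y)) = (\<Sum>y\<in>UNIV. p (x, y)) * (C * r (x, undefined) / PXg p x)"
            unfolding sum_distrib_right using rc[of x _ undefined] by (intro sum.cong refl) (simp add: q0 field_simps)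
          also have "\<dots> = C * r (x, undefined)" using PXg_pos[OF fs, of x] unfolding PXg_def[symmetric] by simp
          finally show ?thesis .
        qed
        then have "(\<Sum>a\<in>UNIV. p a * r a / q0 a) = (\<Sum>x\<in>UNIV. C * r (x, undefined))" by (simp add: sum_pair)
        moreover have "sum r UNIV = (\<Sum>x\<in>UNIV. C * r (x, undefined))"
        proof -
          have "(\<Sum>y\<in>UNIV. r (x, y)) = C * r (x, undefined)" for x
          proof -
            have "(\<Sum>y\<in>UNIV. r (x, y)) = (\<Sum>y\<in>(UNIV::'y set). r (x, undefined))"
              by (rule sum.cong[OF refl]) (rule rc)
            then show ?thesis unfolding C_def by simp
          qed
          then show ?thesis unfolding sum_pair by simp
        qed
        ultimately show ?thesis using rs by simp
      qed
      have "(\<Sum>a\<in>UNIV. p a - p a * r a / q0 a) \<le> (\<Sum>a\<in>UNIV. p a * ln (p a / r a) - p a * ln (p a / q0 a))"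
        by (rule sum_mono) (rule pt)
      then show ?thesis using s1 psum by (simp add: sum_subtractf)
    qed
    ultimately show ?thesis unfolding q0_def by simp
  qed
qed

lemma part1_rev:
  fixes p :: "'x::finite \<times> 'y::finite \<Rightarrow> real" and \<sigma> :: "'x \<Rightarrow> 'x" and \<tau> :: "'y \<Rightarrow> 'y"
  assumes fs: "full_support p" and bs: "bij \<sigma>" and bt: "bij \<tau>"
    and K: "\<kappa> \<in> DIB_ce p (D_fam p E_ce)"
    and inv: "\<And>a. \<kappa> (map_prod \<sigma> \<tau> a) = \<kappa> a"
  shows "cond_prob p (\<sigma> x0) (\<tau> y0) = cond_prob p x0 y0"
proof -
  define g where "g = map_prod \<sigma> \<tau>"
  have gb: "bij_betw g UNIV UNIV"
    unfolding g_def using bs bt by (simp add: bij_betw_map_prod[of \<sigma> UNIV UNIV \<tau> UNIV UNIV] UNIV_Times_UNIV[symmetric] del: UNIV_Times_UNIV)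
  have reidx: "(\<Sum>a\<in>UNIV. F (g a)) = (\<Sum>a\<in>UNIV. F a)" for F :: "'x \<times> 'y \<Rightarrow> real"
    by (rule sum.reindex_bij_betw[OF gb])
  have reidx_s: "(\<Sum>x\<in>UNIV. F (\<sigma> x)) = (\<Sum>x\<in>UNIV. F x)" for F :: "'x \<Rightarrow> real"
    by (rule sum.reindex_bij_betw) (use bs in \<open>simp add: bij_def\<close>)
  have reidx_t: "(\<Sum>y\<in>UNIV. F (\<tau> y)) = (\<Sum>y\<in>UNIV. F y)" for F :: "'y \<Rightarrow> real"
    by (rule sum.reindex_bij_betw) (use bt in \<open>simp add: bij_def\<close>)
  define C where "C = real CARD('y)"
  have C0: "0 < C" unfolding C_def by simp
  define PX where "PX = PXg p"
  have PX0: "0 < PX x" for x unfolding PX_def by (rule PXg_pos[OF fs])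
  have ppos: "0 < p a" for a using fs unfolding full_support_def by blast
  have psum: "sum p UNIV = 1" using fs unfolding full_support_def prob_simplex_def by blast
  have PXsum: "sum PX UNIV = 1" unfolding PX_def PXg_sum psum ..
  have pgsum: "(\<Sum>a\<in>UNIV. p (g a)) = 1" using reidx[of p] psum by simp
  define pbar where "pbar a = (p a + p (g a)) / 2" for a
  have pbpos: "0 < pbar a" for a unfolding pbar_def using ppos[of a] ppos[of "g a"] by simp
  have pbsum: "sum pbar UNIV = 1" unfolding pbar_def using psum pgsum
    by (simp add: sum_divide_distrib[symmetric] sum.distrib)
  define PB where "PB x = (PX x + PX (\<sigma> x)) / 2" for x
  have PXs: "(\<Sum>y\<in>UNIV. p (\<sigma> x, \<tau> y)) = PX (\<sigma> x)" for x
    unfolding PX_def PXg_def using reidx_t[of "\<lambda>y. p (\<sigma> x, y)"] by simp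
  have PBsum: "sum PB UNIV = 1"
    unfolding PB_def using PXsum reidx_s[of PX] by (simp add: sum_divide_distrib[symmetric] sum.distrib)
  have PB0: "0 \<le> PB x" for x unfolding PB_def using PX0[of x] PX0[of "\<sigma> x"] by simp
  define q0 :: "'x \<times> 'y \<Rightarrow> real" where "q0 = (\<lambda>a. case a of (x, y) \<Rightarrow> PXg p x / real CARD('y))"
  define q1 :: "'x \<times> 'y \<Rightarrow> real" where "q1 = (\<lambda>(x, y). PB x / real CARD('y))"
  have q0e: "q0 (x, y) = PX x / C" for x y unfolding q0_def PX_def C_def by simp
  have q1e: "q1 (x, y) = PB x / C" for x y unfolding q1_def C_def by simp
  have q0pos: "0 < q0 a" for a using PX0 C0 by (cases a) (simp add: q0e)
  have q1pos: "0 < q1 a" for a using PX0 C0 by (cases a) (simp add: q1e PB_def add_pos_pos)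
  have q0g: "q0 (g a) = PX (\<sigma> (fst a)) / C" for a by (cases a) (simp add: g_def q0e)
  have q1h: "q1 a = (q0 a + q0 (g a)) / 2" for a
    by (cases a) (simp add: q0g q0e q1e PB_def add_divide_distrib)
  have q1E: "q1 \<in> E_ce"
  proof -
    have "PB \<in> prob_simplex" unfolding prob_simplex_def using PB0 PBsum by simp
    then show ?thesis unfolding E_ce_def q1_def by blast
  qed
  have pushb: "push \<kappa> pbar = push \<kappa> p"
  proof
    fix t
    have "(\<Sum>a\<in>UNIV. \<kappa> a t * p (g a)) = (\<Sum>a\<in>UNIV. \<kappa> (g a) t * p (g a))"
      using inv unfolding g_def by simp
    also have "\<dots> = (\<Sum>a\<in>UNIV. \<kappa> a t * p a)" by (rule reidx[of "\<lambda>b. \<kappa> b t * p b"])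
    finally have e: "(\<Sum>a\<in>UNIV. \<kappa> a t * p (g a)) = (\<Sum>a\<in>UNIV. \<kappa> a t * p a)" .
    have "push \<kappa> pbar t = ((\<Sum>a\<in>UNIV. \<kappa> a t * p a) + (\<Sum>a\<in>UNIV. \<kappa> a t * p (g a))) / 2"
      unfolding push_def pbar_def by (simp add: sum_divide_distrib[symmetric] sum.distrib algebra_simps)
    then show "push \<kappa> pbar t = push \<kappa> p t" unfolding e push_def by simp
  qed
  define L0 where "L0 = (\<Sum>a\<in>UNIV. p a * ln (p a / q0 a))"
  define L1 where "L1 = (\<Sum>a\<in>UNIV. pbar a * ln (pbar a / q1 a))"
  have ch: "is_channel \<kappa>" and DD: "D_fam p E_ce \<le> D_push_fam \<kappa> p E_ce"
    using K unfolding DIB_ce_def by blast+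
  have "ereal L0 \<le> D_fam p E_ce" unfolding L0_def q0_def by (rule Dfam_lower[OF fs])
  also have "\<dots> \<le> D_push_fam \<kappa> p E_ce" by (rule DD)
  also have "\<dots> \<le> KL (push \<kappa> p) (push \<kappa> q1)"
    unfolding D_push_fam_def by (rule INF_lower) (use q1E closure_subset in blast)
  also have "\<dots> = KL (push \<kappa> pbar) (push \<kappa> q1)" unfolding pushb ..
  also have "\<dots> \<le> ereal L1" unfolding L1_def
    by (rule DPI[OF ch]) (use pbpos q1pos in \<open>auto intro: less_imp_le\<close>)
  finally have L01: "L0 \<le> L1" by simp
  define v0 where "v0 a = q0 a * pbar a / q1 a" for a
  define v1 where "v1 a = q0 (g a) * pbar a / q1 a" for a
  have v0pos: "0 < v0 a" for a unfolding v0_def using q0pos[of a] pbpos[of a] q1pos[of a] by simp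
  have v1pos: "0 < v1 a" for a unfolding v1_def using q0pos[of "g a"] pbpos[of a] q1pos[of a] by simp
  have vsum: "(\<Sum>a\<in>UNIV. v0 a + v1 a) = 2"
  proof -
    have "v0 a + v1 a = 2 * pbar a" for a
    proof -
      have "v0 a + v1 a = (q0 a + q0 (g a)) * pbar a / q1 a"
        unfolding v0_def v1_def by (simp add: add_divide_distrib distrib_right)
      also have "q0 a + q0 (g a) = 2 * q1 a" using q1h[of a] by simp
      finally show ?thesis using q1pos[of a] by simp
    qed
    then show ?thesis using pbsum by (simp add: sum_distrib_left[symmetric])
  qed
  have L0g: "L0 = (\<Sum>a\<in>UNIV. p (g a) * ln (p (g a) / q0 (g a)))"
    unfolding L0_def by (rule reidx[of "\<lambda>b. p b * ln (p b / q0 b)", symmetric])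
  have key: "2 * (L0 - L1) = (\<Sum>a\<in>UNIV. p a * ln (p a / v0 a) + p (g a) * ln (p (g a) / v1 a))"
  proof -
    have pt: "p a * ln (p a / q0 a) + p (g a) * ln (p (g a) / q0 (g a)) - 2 * (pbar a * ln (pbar a / q1 a))
        = p a * ln (p a / v0 a) + p (g a) * ln (p (g a) / v1 a)" for a
    proof -
      have l0: "ln (p a / v0 a) = ln (p a / q0 a) - ln (pbar a / q1 a)"
        unfolding v0_def using ppos[of a] q0pos[of a] pbpos[of a] q1pos[of a] by (simp add: ln_div ln_mult)
      have l1: "ln (p (g a) / v1 a) = ln (p (g a) / q0 (g a)) - ln (pbar a / q1 a)"
        unfolding v1_def using ppos[of "g a"] q0pos[of "g a"] pbpos[of a] q1pos[of a] by (simp add: ln_div ln_mult)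
      show ?thesis unfolding l0 l1 pbar_def by (simp add: algebra_simps)
    qed
    have "2 * (L0 - L1) = L0 + L0 - 2 * L1" by simp
    also have "\<dots> = (\<Sum>a\<in>UNIV. p a * ln (p a / q0 a) + p (g a) * ln (p (g a) / q0 (g a)) - 2 * (pbar a * ln (pbar a / q1 a)))"
      unfolding L1_def sum.distrib sum_subtractf sum_distrib_left
      by (subst (2) L0g) (simp add: L0_def)
    also have "\<dots> = (\<Sum>a\<in>UNIV. p a * ln (p a / v0 a) + p (g a) * ln (p (g a) / v1 a))"
      by (rule sum.cong[OF refl]) (rule pt)
    finally show ?thesis .
  qed
  define D where "D a = (p a * ln (p a / v0 a) - (p a - v0 a)) + (p (g a) * ln (p (g a) / v1 a) - (p (g a) - v1 a))" for a
  have D1: "0 \<le> p a * ln (p a / v0 a) - (p a - v0 a)" for a using xlnx_lower[OF ppos v0pos, of a a] by simp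
  have D2: "0 \<le> p (g a) * ln (p (g a) / v1 a) - (p (g a) - v1 a)" for a using xlnx_lower[OF ppos v1pos, of "g a" a] by simp
  have D0: "0 \<le> D a" for a unfolding D_def using D1[of a] D2[of a] by simp
  have "sum D UNIV = 2 * (L0 - L1) - ((\<Sum>a\<in>UNIV. p a) + (\<Sum>a\<in>UNIV. p (g a)) - (\<Sum>a\<in>UNIV. v0 a + v1 a))"
    unfolding key D_def by (simp add: sum.distrib sum_subtractf algebra_simps)
  also have "\<dots> = 2 * (L0 - L1)" using psum pgsum vsum by simp
  finally have "sum D UNIV \<le> 0" using L01 by simp
  then have "sum D UNIV = 0" using sum_nonneg[of UNIV D] D0 by simp
  then have "\<forall>a\<in>UNIV. D a = 0" using sum_nonneg_eq_0_iff[of UNIV D] D0 by simp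
  then have Da: "D (x0, y0) = 0" by blast
  define a where "a = (x0, y0)"
  have e1: "p a * ln (p a / v0 a) = p a - v0 a" using Da D1[of a] D2[of a] unfolding D_def a_def by simp
  have e2: "p (g a) * ln (p (g a) / v1 a) = p (g a) - v1 a" using Da D1[of a] D2[of a] unfolding D_def a_def by simp
  have pa: "p a = v0 a" by (rule xlnx_eq[OF ppos v0pos e1])
  have pga: "p (g a) = v1 a" by (rule xlnx_eq[OF ppos v1pos e2])
  have r0: "p a / q0 a = pbar a / q1 a" using pa q0pos[of a] q1pos[of a] unfolding v0_def by (simp add: field_simps)
  have r1: "p (g a) / q0 (g a) = pbar a / q1 a" using pga q0pos[of "g a"] q1pos[of a] unfolding v1_def by (simp add: field_simps)
  have ga: "g a = (\<sigma> x0, \<tau> y0)" unfolding g_def a_def by simp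
  have "cond_prob p x0 y0 = (p a / q0 a) / C"
    unfolding cond_prob_def a_def q0e PX_def PXg_def using C0 by simp
  moreover have "cond_prob p (\<sigma> x0) (\<tau> y0) = (p (g a) / q0 (g a)) / C"
    unfolding cond_prob_def ga q0e PX_def PXg_def using C0 by simp
  ultimately show ?thesis using r0 r1 by simp
qed



definition q3 :: "3 \<times> bool \<Rightarrow> real" where
  "q3 = (\<lambda>(x,y). if x = 2 then (if y then 4/15 else 1/15) else (if y then 1/15 else 4/15))"

lemma q3_sumy: "(\<Sum>y\<in>UNIV. q3 (x, y)) = 1/3"
  by (simp add: UNIV_bool q3_def)

lemma q3_cond: "cond_prob q3 x y = 3 * q3 (x,y)"
  unfolding cond_prob_def q3_sumy by simp

lemma part3: "\<exists>q :: 3 \<times> bool \<Rightarrow> real. full_support q \<and> proj_cond q \<noteq> proj_ce q"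
proof (intro exI conjI)
  show "full_support q3"
  proof -
    have "sum q3 UNIV = (\<Sum>x\<in>UNIV. \<Sum>y\<in>UNIV. q3 (x,y))"
      by (simp add: sum.cartesian_product UNIV_Times_UNIV[symmetric] del: UNIV_Times_UNIV)
    also have "\<dots> = 1" by (simp add: q3_sumy)
    finally have "sum q3 UNIV = 1" .
    then show ?thesis unfolding full_support_def prob_simplex_def by (auto simp: q3_def)
  qed
  show "proj_cond q3 \<noteq> proj_ce q3"
  proof
    assume eq: "proj_cond q3 = proj_ce q3"
    have "(1, False) \<in> proj_cond q3 (2, True)"
      by (simp add: proj_cond_def q3_cond, simp add: q3_def)
    then have "(1, False) \<in> proj_ce q3 (2, True)" using eq by simp
    then obtain \<sigma> \<tau> where st: "\<sigma> 2 = (1::3)" "\<tau> True = False" and G: "(\<sigma>, \<tau>) \<in> G_ce q3"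
      unfolding proj_ce_def by auto
    from G have bs: "bij \<sigma>" "bij \<tau>" and c: "\<And>x y. cond_prob q3 (\<sigma> x) (\<tau> y) = cond_prob q3 x y"
      unfolding G_ce_def by auto
    have tF: "\<tau> False = True"
      using st(2) bij_is_inj[OF bs(2)] by (metis (full_types) injD)
    have r: "\<And>x. x \<noteq> 2 \<Longrightarrow> \<sigma> x = 2"
    proof -
      fix x :: 3 assume "x \<noteq> 2"
      have "cond_prob q3 (\<sigma> x) False = cond_prob q3 x True"
        using c[of x True] st by simp
      then have "q3 (\<sigma> x, False) = 1/15" using \<open>x \<noteq> 2\<close> by (simp add: q3_cond, simp add: q3_def)
      then show "\<sigma> x = 2" by (auto simp: q3_def split: if_splits)
    qed
    have "\<sigma> 1 = \<sigma> 3" using r[of 1] r[of 3] by simp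
    moreover have "(1::3) \<noteq> 3" by simp
    ultimately show False using bij_is_inj[OF bs(1)] by (metis injD)
  qed
qed

lemma inv_all:
  fixes p :: "'x::finite \<times> 'y::finite \<Rightarrow> real"
  assumes fs: "full_support p" and G: "(\<sigma>, \<tau>) \<in> G_ce p" and K: "\<kappa> \<in> DIB_ce p lam"
  shows "chan_comp \<kappa> (det_chan (map_prod \<sigma> \<tau>)) = \<kappa>"
proof -
  have bs: "bij \<sigma>" and bt: "bij \<tau>" using G unfolding G_ce_def by auto
  have gb: "bij (map_prod \<sigma> \<tau>)"
    using bs bt by (simp add: bij_betw_map_prod[of \<sigma> UNIV UNIV \<tau> UNIV UNIV] UNIV_Times_UNIV[symmetric] del: UNIV_Times_UNIV)
  obtain N where N: "0 < N" "map_prod \<sigma> \<tau> ^^ N = id" using period_exists[OF gb] by blast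
  have "\<kappa> (map_prod \<sigma> \<tau> a) = \<kappa> a" for a
    by (rule inv_main[OF fs G N(2) N(1) K])
  then show ?thesis unfolding chan_comp_det by (simp add: fun_eq_iff)
qed

theorem theorem3:
  fixes p :: "'x::finite \<times> 'y::finite \<Rightarrow> real"
  assumes "full_support p"
  shows "(\<forall>\<sigma> \<tau> \<kappa>. bij \<sigma> \<and> bij \<tau> \<and> \<kappa> \<in> DIB_ce p (D_fam p E_ce) \<longrightarrow>
            ((\<sigma>, \<tau>) \<in> G_ce p \<longleftrightarrow> chan_comp \<kappa> (det_chan (map_prod \<sigma> \<tau>)) = \<kappa>))
       \<and> (\<forall>\<sigma> \<tau>. bij \<sigma> \<and> bij \<tau> \<and> (\<sigma>, \<tau>) \<in> G_ce p \<longrightarrow>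
            (\<forall>(lam::real) \<kappa>. 0 \<le> lam \<and> ereal lam \<le> D_fam p E_ce \<and> \<kappa> \<in> DIB_ce p (ereal lam) \<longrightarrow>
               chan_comp \<kappa> (det_chan (map_prod \<sigma> \<tau>)) = \<kappa>))
       \<and> (\<exists>q :: 3 \<times> bool \<Rightarrow> real. full_support q \<and> proj_cond q \<noteq> proj_ce q)"
proof (intro conjI allI impI)
  fix \<sigma> :: "'x \<Rightarrow> 'x" and \<tau> :: "'y \<Rightarrow> 'y" and \<kappa>
  assume h: "bij \<sigma> \<and> bij \<tau> \<and> \<kappa> \<in> DIB_ce p (D_fam p E_ce)"
  show "(\<sigma>, \<tau>) \<in> G_ce p \<longleftrightarrow> chan_comp \<kappa> (det_chan (map_prod \<sigma> \<tau>)) = \<kappa>"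
  proof
    assume "(\<sigma>, \<tau>) \<in> G_ce p"
    then show "chan_comp \<kappa> (det_chan (map_prod \<sigma> \<tau>)) = \<kappa>"
      using inv_all[OF assms] h by blast
  next
    assume "chan_comp \<kappa> (det_chan (map_prod \<sigma> \<tau>)) = \<kappa>"
    then have inv: "\<kappa> (map_prod \<sigma> \<tau> a) = \<kappa> a" for a
      unfolding chan_comp_det by (metis (no_types))
    have "cond_prob p (\<sigma> x) (\<tau> y) = cond_prob p x y" for x y
      using part1_rev[OF assms, of \<sigma> \<tau> \<kappa>] h inv by blast
    then show "(\<sigma>, \<tau>) \<in> G_ce p" unfolding G_ce_def using h by blast
  qed
next
  fix \<sigma> :: "'x \<Rightarrow> 'x" and \<tau> :: "'y \<Rightarrow> 'y" and lam :: real and \<kappa>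
  assume "bij \<sigma> \<and> bij \<tau> \<and> (\<sigma>, \<tau>) \<in> G_ce p"
    and "0 \<le> lam \<and> ereal lam \<le> D_fam p E_ce \<and> \<kappa> \<in> DIB_ce p (ereal lam)"
  then show "chan_comp \<kappa> (det_chan (map_prod \<sigma> \<tau>)) = \<kappa>"
    using inv_all[OF assms] by blast
next
  show "\<exists>q :: 3 \<times> bool \<Rightarrow> real. full_support q \<and> proj_cond q \<noteq> proj_ce q" by (rule part3)
qed

end
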